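(* Let $(E,A)$ satisfy the standing assumptions below, set $p:=p_{\mathrm{res}}^{(E,A)}+1$ and let $(S_l(t))_{t\geq 0}$ and $(S_r(t))_{t\geq 0}$ be the $p$-times integrated semigroups of $(E,A)$. Let $x\in X_{\operatorname{ran}}$. If $S_r(t)x=0$ for all $t\geq 0$, then $x=0$.
   Context: Standing assumptions: $X$, $Z$ complex Banach spaces; $E\in L(X,Z)$; $A\colon\mathrm{dom}(A)\subseteq X\to Z$ closed and densely defined; $(E,A)$ has a complex resolvent index $p_{\mathrm{res}}^{(E,A)}$, i.e.~the smallest $n\in\mathbb N_0$ with $\mathbb C_{\operatorname{Re}>\omega}\subseteq\rho(E,A)$ and $\Vert(\lambda E-A)^{-1}\Vert\le C|\lambda|^{n-1}$ on $\mathbb C_{\operatorname{Re}>\omega}$ for some $\omega\in\mathbb R$, $C>0$; with $R_r(\lambda)=(\lambda E-A)^{-1}E$ and $X_{\operatorname{ran}}\coloneqq\overline{\operatorname{ran}R_r(\lambda)^p}$, additionally $X_{\operatorname{ran}}\cap\ker E=\{0\}$. $(S_r(t))_{t\ge0}$ is the $p$-times integrated semigroup on $X_{\operatorname{ran}}$: an exponentially bounded family with $R_r(\lambda)x=\lambda^p\int_0^\infty \mathrm e^{-\lambda t}S_r(t)x\,\mathrm dt$ for $x\in X_{\operatorname{ran}}$ and large $\operatorname{Re}\lambda$ (and $S_l$ the analogous family on $\overline{\operatorname{ran}(E(\lambda E-A)^{-1})^p}$). *)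

theory Defs
  imports "HOL-Analysis.Analysis"
begin

text \<open>Complex Banach spaces are modelled as real Banach spaces (class banach)
  together with a complex scalar multiplication compatible with the real one
  and with the norm.\<close>

definition complex_scaling :: "(complex \<Rightarrow> 'a::real_normed_vector \<Rightarrow> 'a) \<Rightarrow> bool" where
  "complex_scaling sm \<longleftrightarrow>
     (\<forall>r x. sm (complex_of_real r) x = scaleR r x) \<and>
     (\<forall>a x y. sm a (x + y) = sm a x + sm a y) \<and>
     (\<forall>a b x. sm (a + b) x = sm a x + sm b x) \<and>
     (\<forall>a b x. sm (a * b) x = sm a (sm b x)) \<and>
     (\<forall>a x. norm (sm a x) = cmod a * norm x)"

definition bounded_clinear_op ::
  "(complex \<Rightarrow> 'x::real_normed_vector \<Rightarrow> 'x) \<Rightarrow> (complex \<Rightarrow> 'z::real_normed_vector \<Rightarrow> 'z)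
   \<Rightarrow> ('x \<Rightarrow> 'z) \<Rightarrow> bool" where
  "bounded_clinear_op smX smZ E \<longleftrightarrow> bounded_linear E \<and> (\<forall>c x. E (smX c x) = smZ c (E x))"

definition closed_dense_op ::
  "(complex \<Rightarrow> 'x::real_normed_vector \<Rightarrow> 'x) \<Rightarrow> (complex \<Rightarrow> 'z::real_normed_vector \<Rightarrow> 'z)
   \<Rightarrow> 'x set \<Rightarrow> ('x \<Rightarrow> 'z) \<Rightarrow> bool" where
  "closed_dense_op smX smZ D A \<longleftrightarrow>
     0 \<in> D \<and> (\<forall>x\<in>D. \<forall>y\<in>D. x + y \<in> D) \<and> (\<forall>c. \<forall>x\<in>D. smX c x \<in> D) \<and>
     (\<forall>x\<in>D. \<forall>y\<in>D. A (x + y) = A x + A y) \<and> (\<forall>c. \<forall>x\<in>D. A (smX c x) = smZ c (A x)) \<and>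
     closed {(x, A x) | x. x \<in> D} \<and>
     closure D = UNIV"

definition pencil :: "(complex \<Rightarrow> 'z \<Rightarrow> 'z) \<Rightarrow> ('x \<Rightarrow> 'z) \<Rightarrow> ('x \<Rightarrow> 'z::ab_group_add)
   \<Rightarrow> complex \<Rightarrow> 'x \<Rightarrow> 'z" where
  "pencil smZ E A lam x = smZ lam (E x) - A x"

definition is_res_inverse ::
  "(complex \<Rightarrow> 'z \<Rightarrow> 'z) \<Rightarrow> ('x::real_normed_vector \<Rightarrow> 'z::real_normed_vector) \<Rightarrow> 'x set
   \<Rightarrow> ('x \<Rightarrow> 'z) \<Rightarrow> complex \<Rightarrow> ('z \<Rightarrow> 'x) \<Rightarrow> bool" where
  "is_res_inverse smZ E D A lam R \<longleftrightarrow>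
     bounded_linear R \<and> (\<forall>z. R z \<in> D \<and> pencil smZ E A lam (R z) = z) \<and>
     (\<forall>x\<in>D. R (pencil smZ E A lam x) = x)"

definition in_resolvent_set ::
  "(complex \<Rightarrow> 'z \<Rightarrow> 'z) \<Rightarrow> ('x::real_normed_vector \<Rightarrow> 'z::real_normed_vector) \<Rightarrow> 'x set
   \<Rightarrow> ('x \<Rightarrow> 'z) \<Rightarrow> complex \<Rightarrow> bool" where
  "in_resolvent_set smZ E D A lam \<longleftrightarrow> (\<exists>R. is_res_inverse smZ E D A lam R)"

definition resolvent ::
  "(complex \<Rightarrow> 'z \<Rightarrow> 'z) \<Rightarrow> ('x::real_normed_vector \<Rightarrow> 'z::real_normed_vector) \<Rightarrow> 'x set
   \<Rightarrow> ('x \<Rightarrow> 'z) \<Rightarrow> complex \<Rightarrow> 'z \<Rightarrow> 'x" where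
  "resolvent smZ E D A lam = (THE R. is_res_inverse smZ E D A lam R)"

definition resolvent_bound ::
  "(complex \<Rightarrow> 'z \<Rightarrow> 'z) \<Rightarrow> ('x::real_normed_vector \<Rightarrow> 'z::real_normed_vector) \<Rightarrow> 'x set
   \<Rightarrow> ('x \<Rightarrow> 'z) \<Rightarrow> nat \<Rightarrow> bool" where
  "resolvent_bound smZ E D A n \<longleftrightarrow>
     (\<exists>\<omega>::real. \<exists>C::real. C > 0 \<and>
        (\<forall>lam. Re lam > \<omega> \<longrightarrow> in_resolvent_set smZ E D A lam \<and>
           (\<forall>z. norm (resolvent smZ E D A lam z) \<le> C * cmod lam powr (real n - 1) * norm z)))"

definition resolvent_index ::
  "(complex \<Rightarrow> 'z \<Rightarrow> 'z) \<Rightarrow> ('x::real_normed_vector \<Rightarrow> 'z::real_normed_vector) \<Rightarrow> 'x set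
   \<Rightarrow> ('x \<Rightarrow> 'z) \<Rightarrow> nat" where
  "resolvent_index smZ E D A = (LEAST n. resolvent_bound smZ E D A n)"

definition right_resolvent ::
  "(complex \<Rightarrow> 'z \<Rightarrow> 'z) \<Rightarrow> ('x::real_normed_vector \<Rightarrow> 'z::real_normed_vector) \<Rightarrow> 'x set
   \<Rightarrow> ('x \<Rightarrow> 'z) \<Rightarrow> complex \<Rightarrow> 'x \<Rightarrow> 'x" where
  "right_resolvent smZ E D A lam = resolvent smZ E D A lam \<circ> E"

definition X_ran ::
  "(complex \<Rightarrow> 'z \<Rightarrow> 'z) \<Rightarrow> ('x::real_normed_vector \<Rightarrow> 'z::real_normed_vector) \<Rightarrow> 'x set
   \<Rightarrow> ('x \<Rightarrow> 'z) \<Rightarrow> complex \<Rightarrow> nat \<Rightarrow> 'x set" where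
  "X_ran smZ E D A lam p = closure (range (right_resolvent smZ E D A lam ^^ p))"

definition integrated_semigroup ::
  "(complex \<Rightarrow> 'x \<Rightarrow> 'x) \<Rightarrow> (complex \<Rightarrow> 'x \<Rightarrow> 'x::real_normed_vector) \<Rightarrow> 'x set \<Rightarrow> nat
   \<Rightarrow> (real \<Rightarrow> 'x \<Rightarrow> 'x) \<Rightarrow> bool" where
  "integrated_semigroup smX Rr Y p S \<longleftrightarrow>
     (\<exists>M w::real. \<forall>t\<ge>0. \<forall>x\<in>Y. norm (S t x) \<le> M * exp (w * t) * norm x) \<and>
     (\<exists>\<omega>::real. \<forall>lam. Re lam > \<omega> \<longrightarrow>
        (\<forall>x\<in>Y. \<exists>y. ((\<lambda>t. smX (exp (- (lam * complex_of_real t))) (S t x)) has_integral y) {0..}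
                   \<and> Rr lam x = smX (lam ^ p) y))"

end

theory Submission
  imports Defs
begin

theorem lemma4p2:
  fixes smX :: "complex \<Rightarrow> 'x::banach \<Rightarrow> 'x"
    and smZ :: "complex \<Rightarrow> 'z::banach \<Rightarrow> 'z"
    and E :: "'x \<Rightarrow> 'z" and D :: "'x set" and A :: "'x \<Rightarrow> 'z"
    and lam0 :: complex and p :: nat
    and S :: "real \<Rightarrow> 'x \<Rightarrow> 'x" and x :: 'x
  assumes "complex_scaling smX" and "complex_scaling smZ"
    and "bounded_clinear_op smX smZ E"
    and "closed_dense_op smX smZ D A"
    and "\<exists>n. resolvent_bound smZ E D A n"
    and "p = resolvent_index smZ E D A + 1"
    and "in_resolvent_set smZ E D A lam0"
    and "X_ran smZ E D A lam0 p \<inter> {v. E v = 0} = {0}"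
    and "integrated_semigroup smX (right_resolvent smZ E D A) (X_ran smZ E D A lam0 p) p S"
    and "x \<in> X_ran smZ E D A lam0 p"
    and "\<forall>t\<ge>0. S t x = 0"
  shows "x = 0"
proof -
  note a = assms
  have sm0: "\<And>c. smX c 0 = 0"
  proof -
    fix c
    have "smX c (0+0) = smX c 0 + smX c 0" using a(1) unfolding complex_scaling_def by blast
    thus "smX c 0 = 0" by simp
  qed
  have smZ0: "\<And>c. smZ c 0 = 0"
  proof -
    fix c
    have "smZ c (0+0) = smZ c 0 + smZ c 0" using a(2) unfolding complex_scaling_def by blast
    thus "smZ c 0 = 0" by simp
  qed
  have E0: "E 0 = 0" using a(3) unfolding bounded_clinear_op_def
    using linear_simps(3) bounded_linear.linear by blast
  have A0: "A 0 = 0"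
  proof -
    have "0 \<in> D" "A (0+0) = A 0 + A 0" using a(4) unfolding closed_dense_op_def by blast+
    thus ?thesis by simp
  qed
  obtain \<omega>1 C where w1: "\<forall>lam. Re lam > \<omega>1 \<longrightarrow> in_resolvent_set smZ E D A lam"
    using a(5) unfolding resolvent_bound_def by blast
  obtain \<omega>2 where w2: "\<forall>lam. Re lam > \<omega>2 \<longrightarrow>
        (\<forall>x\<in>X_ran smZ E D A lam0 p. \<exists>y. ((\<lambda>t. smX (exp (- (lam * complex_of_real t))) (S t x)) has_integral y) {0..}
                   \<and> right_resolvent smZ E D A lam x = smX (lam ^ p) y)"
    using a(9) unfolding integrated_semigroup_def by blast
  define lam where "lam = complex_of_real (max \<omega>1 \<omega>2 + 1)"
  have r1: "Re lam > \<omega>1" "Re lam > \<omega>2" unfolding lam_def by auto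
  obtain y where y: "((\<lambda>t. smX (exp (- (lam * complex_of_real t))) (S t x)) has_integral y) {0..}"
     "right_resolvent smZ E D A lam x = smX (lam ^ p) y"
    using w2 r1(2) a(10) by blast
  have "((\<lambda>t. 0::'x) has_integral y) {0..}"
    using y(1) has_integral_cong[of "{0..}" "\<lambda>t. smX (exp (- (lam * complex_of_real t))) (S t x)" "\<lambda>t. 0"]
    using a(11) sm0 by auto
  hence "y = 0" using has_integral_unique has_integral_0 by blast
  hence rr: "resolvent smZ E D A lam (E x) = 0" using y(2) sm0 unfolding right_resolvent_def by simp
  obtain R where R: "is_res_inverse smZ E D A lam R" using w1 r1(1) unfolding in_resolvent_set_def by blast
  have uniq: "\<And>R'. is_res_inverse smZ E D A lam R' \<Longrightarrow> R' = R"
  proof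
    fix R' z assume R': "is_res_inverse smZ E D A lam R'"
    have "R' z \<in> D" "pencil smZ E A lam (R' z) = z" using R' unfolding is_res_inverse_def by auto
    hence "R (pencil smZ E A lam (R' z)) = R' z" using R unfolding is_res_inverse_def by auto
    thus "R' z = R z" using \<open>pencil smZ E A lam (R' z) = z\<close> by simp
  qed
  have "resolvent smZ E D A lam = R" unfolding resolvent_def using R uniq by (rule the_equality)
  hence "R (E x) = 0" using rr by simp
  hence "E x = pencil smZ E A lam 0" using R unfolding is_res_inverse_def by metis
  also have "\<dots> = 0" unfolding pencil_def using E0 A0 smZ0 by simp
  finally have "x \<in> X_ran smZ E D A lam0 p \<inter> {v. E v = 0}" using a(10) by simp
  thus ?thesis using a(8) by blast
qed

end
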